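(* Let $t$ be an indeterminate, let $\mathbf K$ be an infinite subset of $\mathbb C\setminus\{0,1\}$, and let $\mathbb F$ be a subring of $\mathbb C(t)$ with $$\mathbb C[t,t^{-1}]\subseteq \mathbb F\subseteq\{f/g : f,g\in\mathbb C[t],\ g(1)\neq 0,\ g(\lambda)\neq0\ \forall \lambda\in\mathbf K\}.$$ Let $A$ be the $\mathbb F$-algebra generated by $x_1,\dots,x_n$ subject to finitely many relations $f_1,\dots,f_m$, each $f_i=\sum_{\mathbf x}a^i_{\mathbf x}(t)\mathbf x$ an $\mathbb F$-linear combination of monomials $\mathbf x$ in the $x_j$. Assume $t-1$ is a nonzero, nonunit, non-zero-divisor of $A$ and that $A_1:=A/(t-1)A$ is commutative; let $\gamma_1:A\to A_1$ be the canonical map. For $\lambda\in\mathbf K$ let $A_\lambda$ be the $\mathbb C$-algebra generated by $x_1,\dots,x_n$ subject to the relations $f_i|_{t=\lambda}=\sum_{\mathbf x}a^i_{\mathbf x}(\lambda)\mathbf x$, and let $\gamma_\lambda:A\to A_\lambda$ be the $\mathbb C$-algebra homomorphism with $\gamma_\lambda(t)=\lambda$, $\gamma_\lambda(x_j)=x_j$. Let $\widehat A=\prod_{\lambda\in\mathbf K}A_\lambda$ and $\gamma:A\to\widehat A$, $\gamma(a)=(\gamma_\lambda(a))_{\lambda\in\mathbf K}$. Assume there is an $\mathbb F$-basis $\{\xi_i\}_{i\in I}$ of $A$ such that $\{\gamma_1(\xi_i)\}_{i\in I}$ is a $\mathbb C$-basis of $A_1$ and $\{\gamma_\lambda(\xi_i)\}_{i\in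 I}$ is a $\mathbb C$-basis of $A_\lambda$ for every $\lambda\in\mathbf K$. Then $\gamma$ is a monomorphism of $\mathbb C$-algebras.
   Context: All algebras are over $\mathbb C$ and unital. Elements of $\mathbb F$ are regular at $1$ and at every $\lambda\in\mathbf K$, so evaluating coefficients at $t=\lambda$ or $t=1$ is well defined. *)

theory Defs
  imports "HOL-Computational_Algebra.Polynomial" "HOL-Computational_Algebra.Fraction_Field"
begin

definition eval_rf :: "complex \<Rightarrow> complex poly fract \<Rightarrow> complex" where
  "eval_rf z r = (THE v. \<exists>f g. poly g z \<noteq> 0 \<and> r = Fract f g \<and> v = poly f z / poly g z)"

definition const_rf :: "complex \<Rightarrow> complex poly fract" where
  "const_rf c = Fract [:c:] 1"

text \<open>Noncommutative polynomials (free algebra) over a coefficient ring: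
functions from words (lists of generator indices) to coefficients.\<close>

definition ncp_mult :: "('a list \<Rightarrow> 'r::comm_ring_1) \<Rightarrow> ('a list \<Rightarrow> 'r) \<Rightarrow> 'a list \<Rightarrow> 'r" where
  "ncp_mult p q = (\<lambda>w. \<Sum>k\<le>length w. p (take k w) * q (drop k w))"

definition ncp_add :: "('a list \<Rightarrow> 'r::comm_ring_1) \<Rightarrow> ('a list \<Rightarrow> 'r) \<Rightarrow> 'a list \<Rightarrow> 'r" where
  "ncp_add p q = (\<lambda>w. p w + q w)"

definition ncp_diff :: "('a list \<Rightarrow> 'r::comm_ring_1) \<Rightarrow> ('a list \<Rightarrow> 'r) \<Rightarrow> 'a list \<Rightarrow> 'r" where
  "ncp_diff p q = (\<lambda>w. p w - q w)"

definition ncp_const :: "'r::comm_ring_1 \<Rightarrow> 'a list \<Rightarrow> 'r" where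
  "ncp_const c = (\<lambda>w. if w = [] then c else 0)"

definition ncp_var :: "'a \<Rightarrow> 'a list \<Rightarrow> 'r::comm_ring_1" where
  "ncp_var j = (\<lambda>w. if w = [j] then 1 else 0)"

definition ncp_smult :: "'r::comm_ring_1 \<Rightarrow> ('a list \<Rightarrow> 'r) \<Rightarrow> 'a list \<Rightarrow> 'r" where
  "ncp_smult c p = (\<lambda>w. c * p w)"

definition ncp_sum :: "'i set \<Rightarrow> ('i \<Rightarrow> 'a list \<Rightarrow> 'r::comm_ring_1) \<Rightarrow> 'a list \<Rightarrow> 'r" where
  "ncp_sum S f = (\<lambda>w. \<Sum>i\<in>S. f i w)"

definition FreeAlg :: "'r::comm_ring_1 set \<Rightarrow> nat \<Rightarrow> (nat list \<Rightarrow> 'r) set" where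
  "FreeAlg R n = {p. finite {w. p w \<noteq> 0} \<and> (\<forall>w. p w \<in> R) \<and> (\<forall>w. p w \<noteq> 0 \<longrightarrow> set w \<subseteq> {..<n})}"

inductive_set rel_ideal :: "'r::comm_ring_1 set \<Rightarrow> nat \<Rightarrow> (nat list \<Rightarrow> 'r) list \<Rightarrow> (nat list \<Rightarrow> 'r) set"
  for R n fs where
  zero: "(\<lambda>w. 0) \<in> rel_ideal R n fs"
| gen: "a \<in> FreeAlg R n \<Longrightarrow> b \<in> FreeAlg R n \<Longrightarrow> i < length fs \<Longrightarrow>
        ncp_mult (ncp_mult a (fs ! i)) b \<in> rel_ideal R n fs"
| add: "p \<in> rel_ideal R n fs \<Longrightarrow> q \<in> rel_ideal R n fs \<Longrightarrow> ncp_add p q \<in> rel_ideal R n fs"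

text \<open>Specialization t := z of coefficients (the map gamma_z on the level of free algebras).\<close>
definition spec :: "complex \<Rightarrow> (nat list \<Rightarrow> complex poly fract) \<Rightarrow> nat list \<Rightarrow> complex" where
  "spec z p = (\<lambda>w. eval_rf z (p w))"

text \<open>Preimage in the free algebra of the ideal (t-1)A + 0 of A, i.e. the kernel of
the composite F<x> -> A -> A_1 = A/(t-1)A.\<close>
definition J1 :: "complex poly fract set \<Rightarrow> nat \<Rightarrow> (nat list \<Rightarrow> complex poly fract) list
     \<Rightarrow> (nat list \<Rightarrow> complex poly fract) set" where
  "J1 F n fs = {ncp_add a (ncp_mult (ncp_const (Fract [:-1, 1:] 1)) q) | a q.
       a \<in> rel_ideal F n fs \<and> q \<in> FreeAlg F n}"

end

theory Submission
  imports Defs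
begin

definition regat :: "complex \<Rightarrow> complex poly fract \<Rightarrow> bool" where
  "regat z r \<longleftrightarrow> (\<exists>f g. r = Fract f g \<and> poly g z \<noteq> 0)"

lemma regatI: "poly g z \<noteq> 0 \<Longrightarrow> regat z (Fract f g)"
  unfolding regat_def by blast

lemma eval_Fract: assumes "poly g z \<noteq> 0" shows "eval_rf z (Fract f g) = poly f z / poly g z"
  unfolding eval_rf_def
proof (rule the_equality)
  show "\<exists>f' g'. poly g' z \<noteq> 0 \<and> Fract f g = Fract f' g' \<and> poly f z / poly g z = poly f' z / poly g' z"
    using assms by blast
next
  fix v assume "\<exists>f' g'. poly g' z \<noteq> 0 \<and> Fract f g = Fract f' g' \<and> v = poly f' z / poly g' z"
  then obtain f' g' where h: "poly g' z \<noteq> 0" "Fract f g = Fract f' g'" "v = poly f' z / poly g' z" by blast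
  have g0: "g \<noteq> 0" "g' \<noteq> 0" using assms h(1) by auto
  have "f * g' = f' * g" using h(2) g0 eq_fract(1) by blast
  hence "poly f z * poly g' z = poly f' z * poly g z" by (metis poly_mult)
  thus "v = poly f z / poly g z" using h assms by (simp add: frac_eq_eq mult.commute)
qed

lemma regat_add: "regat z a \<Longrightarrow> regat z b \<Longrightarrow> regat z (a + b) \<and> eval_rf z (a + b) = eval_rf z a + eval_rf z b"
proof -
  assume "regat z a" "regat z b"
  then obtain f g f' g' where h: "a = Fract f g" "poly g z \<noteq> 0" "b = Fract f' g'" "poly g' z \<noteq> 0"
    unfolding regat_def by blast
  have g0: "g \<noteq> 0" "g' \<noteq> 0" using h by auto
  have s: "a + b = Fract (f * g' + f' * g) (g * g')" using h g0 by simp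
  have "poly (g*g') z \<noteq> 0" using h by simp
  then show ?thesis using s h regatI
    by (auto simp: eval_Fract field_simps)
qed

lemma regat_mult: "regat z a \<Longrightarrow> regat z b \<Longrightarrow> regat z (a * b) \<and> eval_rf z (a * b) = eval_rf z a * eval_rf z b"
proof -
  assume "regat z a" "regat z b"
  then obtain f g f' g' where h: "a = Fract f g" "poly g z \<noteq> 0" "b = Fract f' g'" "poly g' z \<noteq> 0"
    unfolding regat_def by blast
  have s: "a * b = Fract (f * f') (g * g')" using h by simp
  have "poly (g*g') z \<noteq> 0" using h by simp
  then show ?thesis using s h regatI
    by (auto simp: eval_Fract field_simps)
qed

lemma regat_uminus: "regat z a \<Longrightarrow> regat z (- a) \<and> eval_rf z (- a) = - eval_rf z a"
proof -
  assume "regat z a"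
  then obtain f g where h: "a = Fract f g" "poly g z \<noteq> 0"
    unfolding regat_def by blast
  then show ?thesis using regatI[of g z "-f"]
    by (auto simp: eval_Fract field_simps)
qed

lemma regat_diff: "regat z a \<Longrightarrow> regat z b \<Longrightarrow> regat z (a - b) \<and> eval_rf z (a - b) = eval_rf z a - eval_rf z b"
  using regat_add[of z a "-b"] regat_uminus[of z b] by simp

lemma regat_0: "regat z 0 \<and> eval_rf z 0 = 0"
  unfolding Zero_fract_def using regatI[of 1 z 0] by (auto simp: eval_Fract)

lemma regat_1: "regat z 1 \<and> eval_rf z 1 = 1"
  unfolding One_fract_def using regatI[of 1 z 1] by (auto simp: eval_Fract)

lemma regat_const: "regat z (const_rf c) \<and> eval_rf z (const_rf c) = c"
  unfolding const_rf_def using regatI[of 1 z "[:c:]"] by (auto simp: eval_Fract)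

lemma regat_sum: "finite S \<Longrightarrow> (\<forall>i\<in>S. regat z (f i)) \<Longrightarrow> regat z (sum f S) \<and> eval_rf z (sum f S) = (\<Sum>i\<in>S. eval_rf z (f i))"
proof (induction S rule: finite_induct)
  case empty then show ?case using regat_0 by simp
next
  case (insert x F) then show ?case using regat_add[of z "f x" "sum f F"] by simp
qed


definition RV :: "complex \<Rightarrow> ('a \<Rightarrow> complex poly fract) \<Rightarrow> bool" where
  "RV z p \<longleftrightarrow> (\<forall>w. regat z (p w))"

lemma spec_mult: assumes "RV z p" "RV z q"
  shows "spec z (ncp_mult p q) = ncp_mult (spec z p) (spec z q) \<and> RV z (ncp_mult p q)"
proof -
  have r: "\<forall>k\<in>{..length w}. regat z (p (take k w) * q (drop k w))" for w
    using assms regat_mult unfolding RV_def by blast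
  have e: "regat z (ncp_mult p q w) \<and> eval_rf z (ncp_mult p q w) = ncp_mult (spec z p) (spec z q) w" for w
    using regat_sum[OF _ r[of w]] regat_mult assms
    unfolding ncp_mult_def spec_def RV_def by simp
  show ?thesis unfolding RV_def using e by (auto simp: spec_def)
qed

lemma spec_add: assumes "RV z p" "RV z q"
  shows "spec z (ncp_add p q) = ncp_add (spec z p) (spec z q) \<and> RV z (ncp_add p q)"
  using assms regat_add unfolding RV_def spec_def ncp_add_def by auto

lemma spec_FreeAlg: "RV z p \<Longrightarrow> p \<in> FreeAlg R n \<Longrightarrow> spec z p \<in> FreeAlg UNIV n"
proof -
  assume a: "RV z p" "p \<in> FreeAlg R n"
  have "{w. spec z p w \<noteq> 0} \<subseteq> {w. p w \<noteq> 0}" using regat_0 unfolding spec_def by auto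
  then show ?thesis using a unfolding FreeAlg_def
    by (auto intro: finite_subset simp: spec_def regat_0)
qed

lemma neg_mult: "ncp_mult (\<lambda>w. - a w) f = (\<lambda>w. - ncp_mult a f w)"
  unfolding ncp_mult_def by (simp add: sum_negf)

lemma rel_ideal_neg: "p \<in> rel_ideal UNIV n gs \<Longrightarrow> (\<lambda>w. - p w) \<in> rel_ideal UNIV n gs"
proof (induction rule: rel_ideal.induct)
  case zero then show ?case using rel_ideal.zero by simp
next
  case (gen a b i)
  have "(\<lambda>w. - a w) \<in> FreeAlg UNIV n" using gen(1) unfolding FreeAlg_def by auto
  then have "ncp_mult (ncp_mult (\<lambda>w. - a w) (gs ! i)) b \<in> rel_ideal UNIV n gs"
    using gen rel_ideal.gen by blast
  then show ?case by (simp add: neg_mult)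
next
  case (add p q)
  then have "ncp_add (\<lambda>w. - p w) (\<lambda>w. - q w) \<in> rel_ideal UNIV n gs" using rel_ideal.add by blast
  then show ?case by (simp add: ncp_add_def)
qed

locale Fring =
  fixes F :: "'r::comm_ring_1 set"
  assumes F0: "0 \<in> F" and Fadd: "\<And>a b. a \<in> F \<Longrightarrow> b \<in> F \<Longrightarrow> a + b \<in> F"
    and Fmult: "\<And>a b. a \<in> F \<Longrightarrow> b \<in> F \<Longrightarrow> a * b \<in> F"
begin

lemma sum_in: "finite S \<Longrightarrow> (\<forall>i\<in>S. f i \<in> F) \<Longrightarrow> sum f S \<in> F"
  by (induction S rule: finite_induct) (auto simp: F0 Fadd)

lemma FreeAlg_add: "p \<in> FreeAlg F n \<Longrightarrow> q \<in> FreeAlg F n \<Longrightarrow> ncp_add p q \<in> FreeAlg F n"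
proof -
  assume a: "p \<in> FreeAlg F n" "q \<in> FreeAlg F n"
  have "{w. ncp_add p q w \<noteq> 0} \<subseteq> {w. p w \<noteq> 0} \<union> {w. q w \<noteq> 0}" unfolding ncp_add_def by auto
  moreover have "set w \<subseteq> {..<n}" if "ncp_add p q w \<noteq> 0" for w
  proof -
    have "p w \<noteq> 0 \<or> q w \<noteq> 0" using that unfolding ncp_add_def by auto
    then show ?thesis using a unfolding FreeAlg_def by auto
  qed
  ultimately show ?thesis using a unfolding FreeAlg_def
    by (auto intro: finite_subset simp: ncp_add_def Fadd)
qed

lemma FreeAlg_mult: "p \<in> FreeAlg F n \<Longrightarrow> q \<in> FreeAlg F n \<Longrightarrow> ncp_mult p q \<in> FreeAlg F n"
proof -
  assume a: "p \<in> FreeAlg F n" "q \<in> FreeAlg F n"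
  have ex: "\<exists>k. p (take k w) \<noteq> 0 \<and> q (drop k w) \<noteq> 0" if "ncp_mult p q w \<noteq> 0" for w
  proof (rule ccontr)
    assume "\<not> ?thesis"
    then have "\<forall>k\<in>{..length w}. p (take k w) * q (drop k w) = 0" by (metis mult_zero_left mult_zero_right)
    then have "ncp_mult p q w = 0" unfolding ncp_mult_def by simp
    then show False using that by simp
  qed
  have sub: "{w. ncp_mult p q w \<noteq> 0} \<subseteq> (\<lambda>(u,v). u @ v) ` ({w. p w \<noteq> 0} \<times> {w. q w \<noteq> 0})"
  proof
    fix w assume "w \<in> {w. ncp_mult p q w \<noteq> 0}"
    then obtain k where "p (take k w) \<noteq> 0" "q (drop k w) \<noteq> 0" using ex by blast
    then show "w \<in> (\<lambda>(u,v). u @ v) ` ({w. p w \<noteq> 0} \<times> {w. q w \<noteq> 0})"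
      by (intro image_eqI[of _ _ "(take k w, drop k w)"]) auto
  qed
  have fin: "finite {w. ncp_mult p q w \<noteq> 0}"
    using a unfolding FreeAlg_def by (intro finite_subset[OF sub]) auto
  have vals: "ncp_mult p q w \<in> F" for w
    using a unfolding ncp_mult_def FreeAlg_def by (auto intro!: sum_in Fmult)
  have sets: "set w \<subseteq> {..<n}" if nz: "ncp_mult p q w \<noteq> 0" for w
  proof -
    obtain k where k: "p (take k w) \<noteq> 0" "q (drop k w) \<noteq> 0" using ex[OF nz] by blast
    then have "set (take k w) \<subseteq> {..<n}" "set (drop k w) \<subseteq> {..<n}" using a unfolding FreeAlg_def by auto
    then show ?thesis by (metis append_take_drop_id set_append Un_subset_iff)
  qed
  show ?thesis unfolding FreeAlg_def using fin vals sets by auto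
qed

lemma rel_ideal_sub: "p \<in> rel_ideal F n fs \<Longrightarrow> set fs \<subseteq> FreeAlg F n \<Longrightarrow> p \<in> FreeAlg F n"
proof (induction rule: rel_ideal.induct)
  case zero then show ?case unfolding FreeAlg_def using F0 by auto
next
  case (gen a b i) then show ?case using FreeAlg_mult nth_mem by blast
next
  case (add p q) then show ?case using FreeAlg_add by blast
qed

end


theorem lemma1p2:
  fixes K :: "complex set"
    and F :: "complex poly fract set"
    and n :: nat
    and fs :: "(nat list \<Rightarrow> complex poly fract) list"
    and Idx :: "'i set"
    and \<xi> :: "'i \<Rightarrow> nat list \<Rightarrow> complex poly fract"
  assumes K_inf: "infinite K"
    and K_sub: "K \<subseteq> - {0, 1}"
    (* F is a subring of C(t) *)
    and F_0: "0 \<in> F" and F_1: "1 \<in> F"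
    and F_add: "\<And>a b. a \<in> F \<Longrightarrow> b \<in> F \<Longrightarrow> a + b \<in> F"
    and F_uminus: "\<And>a. a \<in> F \<Longrightarrow> - a \<in> F"
    and F_mult: "\<And>a b. a \<in> F \<Longrightarrow> b \<in> F \<Longrightarrow> a * b \<in> F"
    (* C[t,t^-1] \<subseteq> F *)
    and F_laurent: "\<And>p k. Fract p ([:0, 1:] ^ k) \<in> F"
    (* F consists of fractions regular at 1 and at every point of K *)
    and F_reg: "\<And>r. r \<in> F \<Longrightarrow> \<exists>f g. r = Fract f g \<and> poly g 1 \<noteq> 0 \<and> (\<forall>z\<in>K. poly g z \<noteq> 0)"
    (* relations f_1..f_m, F-linear combinations of monomials in x_1..x_n *)
    and fs_in: "\<And>f. f \<in> set fs \<Longrightarrow> f \<in> FreeAlg F n"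
    (* t - 1 is nonzero in A *)
    and tm1_nonzero: "ncp_const (Fract [:-1, 1:] 1) \<notin> rel_ideal F n fs"
    (* t - 1 is not a unit in A *)
    and tm1_nonunit: "\<not> (\<exists>q\<in>FreeAlg F n.
          ncp_diff (ncp_mult (ncp_const (Fract [:-1, 1:] 1)) q) (ncp_const 1) \<in> rel_ideal F n fs \<and>
          ncp_diff (ncp_mult q (ncp_const (Fract [:-1, 1:] 1))) (ncp_const 1) \<in> rel_ideal F n fs)"
    (* t - 1 is not a zero divisor in A *)
    and tm1_nzd_l: "\<And>q. q \<in> FreeAlg F n \<Longrightarrow>
          ncp_mult (ncp_const (Fract [:-1, 1:] 1)) q \<in> rel_ideal F n fs \<Longrightarrow> q \<in> rel_ideal F n fs"
    and tm1_nzd_r: "\<And>q. q \<in> FreeAlg F n \<Longrightarrow>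
          ncp_mult q (ncp_const (Fract [:-1, 1:] 1)) \<in> rel_ideal F n fs \<Longrightarrow> q \<in> rel_ideal F n fs"
    (* A_1 = A/(t-1)A is commutative *)
    and A1_comm: "\<And>p q. p \<in> FreeAlg F n \<Longrightarrow> q \<in> FreeAlg F n \<Longrightarrow>
          ncp_diff (ncp_mult p q) (ncp_mult q p) \<in> J1 F n fs"
    (* {xi_i} is an F-basis of A *)
    and xi_in: "\<And>i. i \<in> Idx \<Longrightarrow> \<xi> i \<in> FreeAlg F n"
    and xi_indep: "\<And>S c. finite S \<Longrightarrow> S \<subseteq> Idx \<Longrightarrow> (\<forall>i\<in>S. c i \<in> F) \<Longrightarrow>
          ncp_sum S (\<lambda>i. ncp_smult (c i) (\<xi> i)) \<in> rel_ideal F n fs \<Longrightarrow> (\<forall>i\<in>S. c i = 0)"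
    and xi_span: "\<And>p. p \<in> FreeAlg F n \<Longrightarrow> \<exists>S c. finite S \<and> S \<subseteq> Idx \<and> (\<forall>i\<in>S. c i \<in> F) \<and>
          ncp_diff p (ncp_sum S (\<lambda>i. ncp_smult (c i) (\<xi> i))) \<in> rel_ideal F n fs"
    (* {gamma_1(xi_i)} is a C-basis of A_1 *)
    and xi1_indep: "\<And>S (c :: 'i \<Rightarrow> complex). finite S \<Longrightarrow> S \<subseteq> Idx \<Longrightarrow>
          ncp_sum S (\<lambda>i. ncp_smult (const_rf (c i)) (\<xi> i)) \<in> J1 F n fs \<Longrightarrow> (\<forall>i\<in>S. c i = 0)"
    and xi1_span: "\<And>p. p \<in> FreeAlg F n \<Longrightarrow> \<exists>S (c :: 'i \<Rightarrow> complex). finite S \<and> S \<subseteq> Idx \<and>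
          ncp_diff p (ncp_sum S (\<lambda>i. ncp_smult (const_rf (c i)) (\<xi> i))) \<in> J1 F n fs"
    (* {gamma_lambda(xi_i)} is a C-basis of A_lambda for every lambda in K *)
    and xil_indep: "\<And>z S (c :: 'i \<Rightarrow> complex). z \<in> K \<Longrightarrow> finite S \<Longrightarrow> S \<subseteq> Idx \<Longrightarrow>
          ncp_sum S (\<lambda>i. ncp_smult (c i) (spec z (\<xi> i))) \<in> rel_ideal UNIV n (map (spec z) fs) \<Longrightarrow>
          (\<forall>i\<in>S. c i = 0)"
    and xil_span: "\<And>z p. z \<in> K \<Longrightarrow> p \<in> FreeAlg UNIV n \<Longrightarrow> \<exists>S (c :: 'i \<Rightarrow> complex). finite S \<and> S \<subseteq> Idx \<and>
          ncp_diff p (ncp_sum S (\<lambda>i. ncp_smult (c i) (spec z (\<xi> i)))) \<in> rel_ideal UNIV n (map (spec z) fs)"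
  shows
    "(\<forall>z\<in>K. \<forall>p\<in>rel_ideal F n fs. spec z p \<in> rel_ideal UNIV n (map (spec z) fs))
     \<and> (\<forall>z\<in>K. \<forall>p\<in>FreeAlg F n. \<forall>q\<in>FreeAlg F n.
          spec z (ncp_mult p q) = ncp_mult (spec z p) (spec z q) \<and>
          spec z (ncp_add p q) = ncp_add (spec z p) (spec z q))
     \<and> (\<forall>z\<in>K. \<forall>c p. p \<in> FreeAlg F n \<longrightarrow>
          spec z (ncp_smult (const_rf c) p) = ncp_smult c (spec z p))
     \<and> (\<forall>z\<in>K. spec z (ncp_const 1) = ncp_const 1)
     \<and> (\<forall>p\<in>FreeAlg F n. (\<forall>z\<in>K. spec z p \<in> rel_ideal UNIV n (map (spec z) fs))
          \<longrightarrow> p \<in> rel_ideal F n fs)"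
  proof -
  interpret Fr: Fring F using F_0 F_add F_mult by unfold_locales
  have fsF: "set fs \<subseteq> FreeAlg F n" using fs_in by blast
  have regF: "regat z r" if zr: "z \<in> K" "r \<in> F" for z r
  proof -
    obtain f g where "r = Fract f g" "\<forall>z\<in>K. poly g z \<noteq> 0" using F_reg[OF zr(2)] by blast
    then show ?thesis using regatI zr(1) by blast
  qed
  have RVF: "RV z p" if "z \<in> K" "p \<in> FreeAlg F n" for z p
    using that regF unfolding RV_def FreeAlg_def by blast
  have P2: "\<forall>z\<in>K. \<forall>p\<in>FreeAlg F n. \<forall>q\<in>FreeAlg F n.
          spec z (ncp_mult p q) = ncp_mult (spec z p) (spec z q) \<and>
          spec z (ncp_add p q) = ncp_add (spec z p) (spec z q)"
    using spec_mult spec_add RVF by blast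
  have P3: "\<forall>z\<in>K. \<forall>c p. p \<in> FreeAlg F n \<longrightarrow>
          spec z (ncp_smult (const_rf c) p) = ncp_smult c (spec z p)"
  proof (intro ballI allI impI)
    fix z c p assume z: "z \<in> K" and p: "p \<in> FreeAlg F n"
    show "spec z (ncp_smult (const_rf c) p) = ncp_smult c (spec z p)"
    proof (rule ext)
      fix w
      have "regat z (p w)" using RVF[OF z p] unfolding RV_def by blast
      then show "spec z (ncp_smult (const_rf c) p) w = ncp_smult c (spec z p) w"
        using regat_mult[OF conjunct1[OF regat_const[of z c]]] regat_const[of z c]
        unfolding spec_def ncp_smult_def by simp
    qed
  qed
  have P4: "\<forall>z\<in>K. spec z (ncp_const 1) = ncp_const 1"
  proof
    fix z
    show "spec z (ncp_const 1) = ncp_const 1"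
      unfolding spec_def ncp_const_def using regat_0 regat_1 by auto
  qed
  have P1: "spec z p \<in> rel_ideal UNIV n (map (spec z) fs)" if z: "z \<in> K" and pI: "p \<in> rel_ideal F n fs" for z p
    using pI
  proof (induction rule: rel_ideal.induct)
    case zero
    have "spec z (\<lambda>w. 0) = (\<lambda>w. 0)" unfolding spec_def using regat_0 by simp
    then show ?case using rel_ideal.zero by metis
  next
    case (gen a b i)
    have fi: "fs ! i \<in> FreeAlg F n" using gen(3) fsF nth_mem by blast
    have af: "ncp_mult a (fs ! i) \<in> FreeAlg F n" using Fr.FreeAlg_mult[OF gen(1) fi] .
    have e: "spec z (ncp_mult (ncp_mult a (fs ! i)) b) =
        ncp_mult (ncp_mult (spec z a) (spec z (fs ! i))) (spec z b)"
      using spec_mult[OF RVF[OF z af] RVF[OF z gen(2)]] spec_mult[OF RVF[OF z gen(1)] RVF[OF z fi]] by simp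
    have "spec z a \<in> FreeAlg UNIV n" "spec z b \<in> FreeAlg UNIV n"
      using spec_FreeAlg RVF z gen(1,2) by blast+
    moreover have "map (spec z) fs ! i = spec z (fs ! i)" "i < length (map (spec z) fs)" using gen(3) by auto
    ultimately show ?case unfolding e using rel_ideal.gen by metis
  next
    case (add p q)
    have "p \<in> FreeAlg F n" "q \<in> FreeAlg F n" using add(1,2) Fr.rel_ideal_sub fsF by blast+
    then have "spec z (ncp_add p q) = ncp_add (spec z p) (spec z q)" using spec_add RVF z by blast
    then show ?case using add(3,4) rel_ideal.add by metis
  qed
  have P5: "p \<in> rel_ideal F n fs" if pF: "p \<in> FreeAlg F n"
    and hz: "\<forall>z\<in>K. spec z p \<in> rel_ideal UNIV n (map (spec z) fs)" for p
  proof -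
    obtain S c where S: "finite S" "S \<subseteq> Idx" "\<forall>i\<in>S. c i \<in> F"
      and d: "ncp_diff p (ncp_sum S (\<lambda>i. ncp_smult (c i) (\<xi> i))) \<in> rel_ideal F n fs"
      using xi_span[OF pF] by blast
    define Sg where "Sg = ncp_sum S (\<lambda>i. ncp_smult (c i) (\<xi> i))"
    have ez: "eval_rf z (c i) = 0" if z: "z \<in> K" and i: "i \<in> S" for z i
    proof -
      have sd: "spec z (ncp_diff p Sg) \<in> rel_ideal UNIV n (map (spec z) fs)"
        using P1[OF z] d unfolding Sg_def by blast
      have eq: "ncp_sum S (\<lambda>i. ncp_smult (eval_rf z (c i)) (spec z (\<xi> i)))
          = ncp_add (spec z p) (\<lambda>w. - spec z (ncp_diff p Sg) w)"
      proof (rule ext)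
        fix w
        have r: "\<forall>i\<in>S. regat z (c i * \<xi> i w)"
          using S regF[OF z] regat_mult xi_in unfolding FreeAlg_def by blast
        have rs: "regat z (\<Sum>i\<in>S. c i * \<xi> i w) \<and> eval_rf z (\<Sum>i\<in>S. c i * \<xi> i w) = (\<Sum>i\<in>S. eval_rf z (c i * \<xi> i w))"
          using regat_sum[OF S(1) r] .
        have rm: "eval_rf z (c i * \<xi> i w) = eval_rf z (c i) * eval_rf z (\<xi> i w)" if "i \<in> S" for i
          using S regF[OF z] regat_mult xi_in that unfolding FreeAlg_def by blast
        have rp: "regat z (p w)" using RVF[OF z pF] unfolding RV_def by blast
        have "eval_rf z (p w - (\<Sum>i\<in>S. c i * \<xi> i w)) = eval_rf z (p w) - (\<Sum>i\<in>S. eval_rf z (c i * \<xi> i w))"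
          using regat_diff[OF rp conjunct1[OF rs]] rs by simp
        then show "ncp_sum S (\<lambda>i. ncp_smult (eval_rf z (c i)) (spec z (\<xi> i))) w
          = ncp_add (spec z p) (\<lambda>w. - spec z (ncp_diff p Sg) w) w"
          unfolding Sg_def ncp_sum_def ncp_smult_def ncp_add_def ncp_diff_def spec_def
          using rm by simp
      qed
      have "ncp_add (spec z p) (\<lambda>w. - spec z (ncp_diff p Sg) w) \<in> rel_ideal UNIV n (map (spec z) fs)"
        using rel_ideal.add hz z rel_ideal_neg[OF sd] by blast
      then show ?thesis using xil_indep[OF z S(1,2), of "\<lambda>i. eval_rf z (c i)"] eq i by simp
    qed
    have c0: "c i = 0" if i: "i \<in> S" for i
    proof -
      obtain f g where fg: "c i = Fract f g" "poly g 1 \<noteq> 0" "\<forall>z\<in>K. poly g z \<noteq> 0"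
        using F_reg S(3) i by blast
      have "K \<subseteq> {x. poly f x = 0}"
      proof
        fix z assume z: "z \<in> K"
        have "poly f z / poly g z = 0" using ez[OF z i] eval_Fract[of g z f] fg z by simp
        then show "z \<in> {x. poly f x = 0}" using fg(3) z by simp
      qed
      then have "f = 0" using K_inf poly_roots_finite finite_subset by blast
      then show ?thesis using fg(1) eq_fract(3) Zero_fract_def by metis
    qed
    have "Sg = (\<lambda>w. 0)" unfolding Sg_def ncp_sum_def ncp_smult_def using c0 by simp
    then have "ncp_diff p Sg = p" unfolding ncp_diff_def by simp
    then show ?thesis using d Sg_def by simp
  qed
  show ?thesis using P1 P2 P3 P4 P5 by blast
qed

end
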